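(* Let $a_0,a_1,a_2,b_0,b_1$ be complex numbers with $a_1\neq 0$ and $a_2\neq 0$. Let $(T(n,k))_{n\ge 0,\,k\in\mathbb{Z}}$ be defined by $T(0,0)=1$, $T(0,k)=0$ for $k\neq 0$, $T(n,k)=0$ for $k<0$, and for $n\ge 1$ and all $k$, \[ T(n,k)=(a_2 n+a_1 k+a_0)\,T(n-1,k)+(b_1 k+b_0)\,T(n-1,k-1). \] Then for all integers $n,k\ge 0$, \[ T(n,k)=\frac{(b_0+b_1\,|\,b_1)^{(\overline{k})}}{a_1^k\,k!}\sum_{j=0}^{k}(-1)^{k-j}\binom{k}{j}\prod_{r=1}^{n}\bigl(a_0+a_1 j+r a_2\bigr). \]
   Context: For a number $x$, a step $a$ and an integer $k\ge 0$, $(x\,|\,a)^{(\overline{k})}=x(x+a)(x+2a)\cdots(x+(k-1)a)$, with $(x\,|\,a)^{(\overline{0})}=1$. Empty products equal $1$. *)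

theory Defs
  imports Complex_Main
begin

definition rising_step :: "complex \<Rightarrow> complex \<Rightarrow> nat \<Rightarrow> complex" where
  "rising_step x a k = (\<Prod>i<k. x + of_nat i * a)"

end

theory Submission
  imports Defs
begin

definition PP :: "complex \<Rightarrow> complex \<Rightarrow> complex \<Rightarrow> nat \<Rightarrow> nat \<Rightarrow> complex" where
  "PP a0 a1 a2 n j = (\<Prod>r=1..n. a0 + a1 * of_nat j + of_nat r * a2)"

definition SS :: "complex \<Rightarrow> complex \<Rightarrow> complex \<Rightarrow> nat \<Rightarrow> nat \<Rightarrow> complex" where
  "SS a0 a1 a2 n k = (\<Sum>j=0..k. (-1) ^ (k - j) * of_nat (k choose j) * PP a0 a1 a2 n j)"

lemma PP_Suc: "PP a0 a1 a2 (Suc n) j = PP a0 a1 a2 n j * (a0 + a1 * of_nat j + of_nat (Suc n) * a2)"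
  unfolding PP_def by (simp add: prod.nat_ivl_Suc')

lemma SS_0: "SS a0 a1 a2 0 k = (if k = 0 then 1 else 0)"
proof -
  have "SS a0 a1 a2 0 k = (\<Sum>j=0..k. of_nat (k choose j) * (1::complex) ^ j * (-1) ^ (k - j))"
    unfolding SS_def PP_def by (intro sum.cong) auto
  also have "\<dots> = (1 + (-1)) ^ k" by (subst binomial_ring) (simp add: atMost_atLeast0)
  finally show ?thesis by simp
qed

lemma SS_Suc0: "SS a0 a1 a2 (Suc n) 0 = (a2 * of_nat (Suc n) + a0) * SS a0 a1 a2 n 0"
  unfolding SS_def by (simp add: PP_Suc algebra_simps)

lemma aux: fixes B1 J K1 B0 s P a0 a1 a2 N :: complex
  assumes "B1*J = K1*B1 - K1*B0"
  shows "(-s)*B1*(P*(a0+a1*J+N*a2)) = (a2*N + a1*K1 + a0)*((-s)*B1*P) + a1*K1*(s*B0*P)"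
proof -
  have "(-s)*B1*(P*(a0+a1*J+N*a2)) = (-s)*P*(a0+N*a2)*B1 - s*P*a1*(B1*J)" by (simp add: algebra_simps)
  also have "\<dots> = (-s)*P*(a0+N*a2)*B1 - s*P*a1*(K1*B1 - K1*B0)" using assms by simp
  also have "\<dots> = (a2*N + a1*K1 + a0)*((-s)*B1*P) + a1*K1*(s*B0*P)" by (simp add: algebra_simps)
  finally show ?thesis .
qed

lemma SS_SucSuc:
  "SS a0 a1 a2 (Suc n) (Suc k) = (a2 * of_nat (Suc n) + a1 * of_nat (Suc k) + a0) * SS a0 a1 a2 n (Suc k)
     + a1 * of_nat (Suc k) * SS a0 a1 a2 n k"
proof -
  have trm: "(-1) ^ (Suc k - j) * of_nat (Suc k choose j) * PP a0 a1 a2 (Suc n) j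
     = (a2 * of_nat (Suc n) + a1 * of_nat (Suc k) + a0) * ((-1) ^ (Suc k - j) * of_nat (Suc k choose j) * PP a0 a1 a2 n j)
       + a1 * of_nat (Suc k) * (if j \<le> k then (-1) ^ (k - j) * of_nat (k choose j) * PP a0 a1 a2 n j else 0)"
    if "j \<in> {0..Suc k}" for j
  proof (cases "j \<le> k")
    case True
    have b: "(Suc k - j) * (Suc k choose j) = Suc k * (k choose j)"
      using binomial_absorb_comp[of "Suc k" j] by simp
    have b': "of_nat (Suc k choose j) * of_nat j = (of_nat (Suc k) * of_nat (Suc k choose j) - of_nat (Suc k) * of_nat (k choose j) :: complex)"
    proof -
      have "Suc k * (Suc k choose j) = ((Suc k - j) + j) * (Suc k choose j)" using True by simp
      also have "\<dots> = Suc k * (k choose j) + j * (Suc k choose j)" using b by (simp only: add_mult_distrib)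
      finally have "of_nat (Suc k * (Suc k choose j)) = (of_nat (Suc k * (k choose j) + j * (Suc k choose j)) :: complex)"
        by (simp only:)
      then show ?thesis by (simp only: of_nat_mult of_nat_add) (simp add: algebra_simps)
    qed
    have e: "Suc k - j = Suc (k - j)" using True by simp
    show ?thesis
      unfolding PP_Suc e power_Suc if_P[OF True] mult_minus1
      by (rule aux[OF b'])
  next
    case False
    then have "j = Suc k" using that by auto
    then show ?thesis by (simp add: PP_Suc algebra_simps)
  qed
  have "SS a0 a1 a2 (Suc n) (Suc k) = (\<Sum>j=0..Suc k. (a2 * of_nat (Suc n) + a1 * of_nat (Suc k) + a0) * ((-1) ^ (Suc k - j) * of_nat (Suc k choose j) * PP a0 a1 a2 n j)
       + a1 * of_nat (Suc k) * (if j \<le> k then (-1) ^ (k - j) * of_nat (k choose j) * PP a0 a1 a2 n j else 0))"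
    unfolding SS_def by (rule sum.cong[OF refl trm])
  also have "\<dots> = (a2 * of_nat (Suc n) + a1 * of_nat (Suc k) + a0) * SS a0 a1 a2 n (Suc k)
     + a1 * of_nat (Suc k) * (\<Sum>j=0..Suc k. (if j \<le> k then (-1) ^ (k - j) * of_nat (k choose j) * PP a0 a1 a2 n j else 0))"
    unfolding SS_def by (simp only: sum.distrib sum_distrib_left)
  also have "(\<Sum>j=0..Suc k. (if j \<le> k then (-1) ^ (k - j) * of_nat (k choose j) * PP a0 a1 a2 n j else 0)) = SS a0 a1 a2 n k"
    unfolding SS_def by (simp add: sum.atLeast0_atMost_Suc)
  finally show ?thesis .
qed

theorem mainTheorem2:
  fixes a0 a1 a2 b0 b1 :: complex
    and T :: "nat \<Rightarrow> int \<Rightarrow> complex"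
  assumes "a1 \<noteq> 0" and "a2 \<noteq> 0"
    and "T 0 0 = 1"
    and "\<And>k. k \<noteq> 0 \<Longrightarrow> T 0 k = 0"
    and "\<And>n k. k < 0 \<Longrightarrow> T n k = 0"
    and "\<And>n k. n \<ge> 1 \<Longrightarrow>
           T n k = (a2 * of_nat n + a1 * of_int k + a0) * T (n - 1) k
                   + (b1 * of_int k + b0) * T (n - 1) (k - 1)"
  shows "\<And>n k::nat. T n (int k) =
           rising_step (b0 + b1) b1 k / (a1 ^ k * of_nat (fact k))
           * (\<Sum>j=0..k. (-1) ^ (k - j) * of_nat (k choose j)
                * (\<Prod>r=1..n. a0 + a1 * of_nat j + of_nat r * a2))"
proof -
  fix n k :: nat
  define c where "c k = rising_step (b0 + b1) b1 k / (a1 ^ k * of_nat (fact k))" for k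
  have crel: "c (Suc m) * (a1 * of_nat (Suc m)) = (b1 * of_nat (Suc m) + b0) * c m" for m
  proof -
    have r: "rising_step (b0 + b1) b1 (Suc m) = rising_step (b0 + b1) b1 m * (b0 + b1 + of_nat m * b1)"
      unfolding rising_step_def by simp
    define R where "R = rising_step (b0 + b1) b1 m"
    define D where "D = a1 ^ m * (of_nat (fact m) :: complex)"
    define x where "x = a1 * (of_nat (Suc m) :: complex)"
    define q where "q = b1 * of_nat (Suc m) + b0"
    have D0: "D \<noteq> 0" unfolding D_def using assms(1) by simp
    have "(of_nat (Suc m)::complex) \<noteq> 0" by (simp only: of_nat_eq_0_iff nat.distinct(1) not_False_eq_True)
    then have x0: "x \<noteq> 0" unfolding x_def using assms(1) by simp
    have q: "b0 + b1 + of_nat m * b1 = q" unfolding q_def by (simp add: algebra_simps)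
    have den: "a1 ^ Suc m * of_nat (fact (Suc m)) = x * D"
      unfolding x_def D_def by (simp only: power_Suc fact_Suc of_nat_mult of_nat_id mult_ac)
    have "c (Suc m) = R * q / (x * D)" unfolding c_def r den q R_def ..
    moreover have "c m = R / D" unfolding c_def R_def D_def ..
    ultimately have "c (Suc m) * x = q * c m" using D0 x0 by simp
    then show ?thesis unfolding x_def q_def .
  qed
  have main: "T n (int k) = c k * SS a0 a1 a2 n k" for n k
  proof (induction n arbitrary: k)
    case 0
    show ?case using assms(3,4) by (cases k) (auto simp: SS_0 c_def rising_step_def)
  next
    case (Suc n)
    have rec: "T (Suc n) (int k) = (a2 * of_nat (Suc n) + a1 * of_int (int k) + a0) * T n (int k)
                   + (b1 * of_int (int k) + b0) * T n (int k - 1)"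
      using assms(6)[of "Suc n" "int k"] by simp
    show ?case
    proof (cases k)
      case 0
      then show ?thesis using rec Suc.IH[of 0] assms(5)[of "-1" n] by (simp add: SS_Suc0)
    next
      case (Suc m)
      have "int k - 1 = int m" using Suc by simp
      then have "T (Suc n) (int k) = (a2 * of_nat (Suc n) + a1 * of_nat (Suc m) + a0) * (c (Suc m) * SS a0 a1 a2 n (Suc m))
                   + (b1 * of_nat (Suc m) + b0) * (c m * SS a0 a1 a2 n m)"
        using rec Suc.IH[of k] Suc.IH[of m] Suc by simp
      also have "\<dots> = c (Suc m) * SS a0 a1 a2 (Suc n) (Suc m)"
      proof -
        have e2: "(b1 * of_nat (Suc m) + b0) * (c m * SS a0 a1 a2 n m) = (c (Suc m) * (a1 * of_nat (Suc m))) * SS a0 a1 a2 n m"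
          using crel[of m] by (metis mult.assoc)
        show ?thesis unfolding SS_SucSuc e2 by (simp only: distrib_left mult_ac)
      qed
      finally show ?thesis using Suc by simp
    qed
  qed
  show "T n (int k) =
           rising_step (b0 + b1) b1 k / (a1 ^ k * of_nat (fact k))
           * (\<Sum>j=0..k. (-1) ^ (k - j) * of_nat (k choose j)
                * (\<Prod>r=1..n. a0 + a1 * of_nat j + of_nat r * a2))"
    using main[of n k] unfolding c_def SS_def PP_def .
qed

end
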